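(* Let $a<b$ and let $f:[a,b]\rightarrow\mathbb{R}$ be an absolutely continuous mapping with $f'\in L^2[a,b]$, and let $\sigma(f')=\|f'\|_2^2-\frac{(f(b)-f(a))^2}{b-a}$. Then \[ \left|\frac{f\left(\frac{3a+b}{4}\right)+f\left(\frac{a+3b}{4}\right)}{2} -\frac{1}{b-a}\int_{a}^{b}f(t)\,dt\right|\leq \frac{(b-a)^{1/2}}{4\sqrt{3}}\sqrt{\sigma(f')}. \]
   Context: $\|g\|_2=\left(\int_a^b g(t)^2\,dt\right)^{1/2}$. *)

theory Defs
  imports "HOL-Analysis.Analysis"
begin

definition absolutely_continuous_real_on :: "(real \<Rightarrow> real) \<Rightarrow> real \<Rightarrow> real \<Rightarrow> bool" where
  "absolutely_continuous_real_on f a b \<longleftrightarrow>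
     (\<forall>e>0. \<exists>d>0. \<forall>(n::nat) (u::nat \<Rightarrow> real) (v::nat \<Rightarrow> real).
        (\<forall>k<n. a \<le> u k \<and> u k \<le> v k \<and> v k \<le> b) \<longrightarrow>
        (\<forall>i<n. \<forall>j<n. i \<noteq> j \<longrightarrow> v i \<le> u j \<or> v j \<le> u i) \<longrightarrow>
        (\<Sum>k<n. v k - u k) < d \<longrightarrow>
        (\<Sum>k<n. \<bar>f (v k) - f (u k)\<bar>) < e)"

end

theory Submission
  imports Defs
begin

lemma ac_finite:
  assumes ac: "absolutely_continuous_real_on F a b" and e: "e > 0"
  obtains \<delta> where "\<delta> > 0" "\<And>Q U V. finite Q \<Longrightarrow> (\<forall>i\<in>Q. a \<le> U i \<and> U i \<le> V i \<and> V i \<le> b) \<Longrightarrow>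
      (\<forall>i\<in>Q. \<forall>j\<in>Q. i \<noteq> j \<longrightarrow> V i \<le> U j \<or> V j \<le> U i) \<Longrightarrow> (\<Sum>i\<in>Q. V i - U i) < \<delta> \<Longrightarrow>
      (\<Sum>i\<in>Q. \<bar>F (V i) - F (U i)\<bar>) < e"
proof -
  have ex: "\<exists>\<delta>>0. \<forall>(n::nat) (u::nat \<Rightarrow> real) (v::nat \<Rightarrow> real).
        (\<forall>k<n. a \<le> u k \<and> u k \<le> v k \<and> v k \<le> b) \<longrightarrow>
        (\<forall>i<n. \<forall>j<n. i \<noteq> j \<longrightarrow> v i \<le> u j \<or> v j \<le> u i) \<longrightarrow>
        (\<Sum>k<n. v k - u k) < \<delta> \<longrightarrow>
        (\<Sum>k<n. \<bar>F (v k) - F (u k)\<bar>) < e"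
    using ac[unfolded absolutely_continuous_real_on_def, THEN spec[of _ e]] e by (rule mp)
  then obtain \<delta> where d: "\<delta> > 0" and H0: "\<forall>(n::nat) (u::nat \<Rightarrow> real) (v::nat \<Rightarrow> real).
        (\<forall>k<n. a \<le> u k \<and> u k \<le> v k \<and> v k \<le> b) \<longrightarrow>
        (\<forall>i<n. \<forall>j<n. i \<noteq> j \<longrightarrow> v i \<le> u j \<or> v j \<le> u i) \<longrightarrow>
        (\<Sum>k<n. v k - u k) < \<delta> \<longrightarrow>
        (\<Sum>k<n. \<bar>F (v k) - F (u k)\<bar>) < e" by (elim exE conjE)
  note H = H0[rule_format]
  show ?thesis
  proof (rule that[OF d])
    fix Q :: "'a set" and U V
    assume Q: "finite Q" and iv: "\<forall>i\<in>Q. a \<le> U i \<and> U i \<le> V i \<and> V i \<le> b"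
      and dj: "\<forall>i\<in>Q. \<forall>j\<in>Q. i \<noteq> j \<longrightarrow> V i \<le> U j \<or> V j \<le> U i"
      and sm: "(\<Sum>i\<in>Q. V i - U i) < \<delta>"
    obtain h where h: "bij_betw h {0..<card Q} Q" using ex_bij_betw_nat_finite[OF Q] by blast
    have hin: "\<And>k. k < card Q \<Longrightarrow> h k \<in> Q" using h by (auto simp: bij_betw_def)
    have hinj: "\<And>i j. i < card Q \<Longrightarrow> j < card Q \<Longrightarrow> i \<noteq> j \<Longrightarrow> h i \<noteq> h j"
      using h by (auto simp: bij_betw_def inj_on_def)
    have s1: "(\<Sum>k<card Q. V (h k) - U (h k)) = (\<Sum>i\<in>Q. V i - U i)"
      using sum.reindex_bij_betw[OF h, of "\<lambda>i. V i - U i"] by (simp add: atLeast0LessThan)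
    have s2: "(\<Sum>k<card Q. \<bar>F (V (h k)) - F (U (h k))\<bar>) = (\<Sum>i\<in>Q. \<bar>F (V i) - F (U i)\<bar>)"
      using sum.reindex_bij_betw[OF h, of "\<lambda>i. \<bar>F (V i) - F (U i)\<bar>"] by (simp add: atLeast0LessThan)
    have c1: "\<forall>k<card Q. a \<le> U (h k) \<and> U (h k) \<le> V (h k) \<and> V (h k) \<le> b"
      using iv hin by blast
    have c2: "\<forall>i<card Q. \<forall>j<card Q. i \<noteq> j \<longrightarrow> V (h i) \<le> U (h j) \<or> V (h j) \<le> U (h i)"
      using dj hin hinj by blast
    have "(\<Sum>k<card Q. \<bar>F (V (h k)) - F (U (h k))\<bar>) < e"
      using H0[THEN spec[of _ "card Q"], THEN spec[of _ "\<lambda>k. U (h k)"], THEN spec[of _ "\<lambda>k. V (h k)"]] c1 c2 sm s1 by simp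
    then show "(\<Sum>i\<in>Q. \<bar>F (V i) - F (U i)\<bar>) < e" using s2 by simp
  qed
qed



lemma interior_disj_order:
  fixes u1 v1 u2 v2 :: real
  assumes "u1 < v1" "u2 < v2" "{u1<..<v1} \<inter> {u2<..<v2} = {}"
  shows "v1 \<le> u2 \<or> v2 \<le> u1"
proof (rule ccontr)
  assume "\<not> ?thesis"
  then have m: "max u1 u2 < min v1 v2" using assms by linarith
  define z where "z = (max u1 u2 + min v1 v2)/2"
  have "z \<in> {u1<..<v1}" "z \<in> {u2<..<v2}" using m unfolding z_def by auto
  then have "z \<in> {u1<..<v1} \<inter> {u2<..<v2}" by (rule IntI)
  then show False unfolding assms(3) by simp
qed

abbreviation "hcontent \<equiv> Henstock_Kurzweil_Integration.content"

lemma ftc_ac: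
  fixes F g :: "real \<Rightarrow> real"
  assumes cd: "c \<le> d" and ac: "absolutely_continuous_real_on F c d" and negE: "negligible E"
   and der: "\<And>x. x \<in> {c..d} \<Longrightarrow> x \<notin> E \<Longrightarrow> (F has_real_derivative g x) (at x within {c..d})"
  shows "((\<lambda>x. if x \<in> E then 0 else g x) has_integral (F d - F c)) {c..d}"
  unfolding has_integral[of _ _ c d, unfolded box_real]
proof (intro allI impI)
  fix e :: real assume e: "e > 0"
  define g' where "g' = (\<lambda>x. if x \<in> E then 0 else g x)"
  obtain \<delta> where d0: "\<delta> > 0" and AC: "\<And>(Q::(real \<times> real set) set) U V. finite Q \<Longrightarrow> (\<forall>i\<in>Q. c \<le> U i \<and> U i \<le> V i \<and> V i \<le> d) \<Longrightarrow>
      (\<forall>i\<in>Q. \<forall>j\<in>Q. i \<noteq> j \<longrightarrow> V i \<le> U j \<or> V j \<le> U i) \<Longrightarrow> (\<Sum>i\<in>Q. V i - U i) < \<delta> \<Longrightarrow>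
      (\<Sum>i\<in>Q. \<bar>F (V i) - F (U i)\<bar>) < e/2"
    apply (rule ac_finite[OF ac half_gt_zero[OF e]])
    apply (rule that)
    apply assumption
    apply assumption
    done
  have Eleb: "E \<in> sets lebesgue" using negE negligible_imp_measurable by blast
  obtain T where T: "open T" "E \<subseteq> T" "(T - E) \<in> lmeasurable" "emeasure lebesgue (T - E) < ennreal \<delta>"
    by (rule sets_lebesgue_outer_open[OF Eleb d0])
  have Elm: "E \<in> lmeasurable" using negE negligible_imp_measurable by blast
  have TE: "T = (T - E) \<union> E" using T(2) by blast
  have Tlm: "T \<in> lmeasurable" by (subst TE) (intro fmeasurable.Un T(3) Elm)
  have "measure lebesgue E = 0" using negligible_iff_measure0[OF Elm] negE by simp
  then have "measure lebesgue T \<le> measure lebesgue (T - E)"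
    using measure_Un_le[OF fmeasurableD[OF T(3)] fmeasurableD[OF Elm]] TE by simp
  moreover have "measure lebesgue (T - E) < \<delta>"
    using T(3,4) d0 by (simp add: emeasure_eq_measure2 ennreal_less_iff)
  ultimately have mT: "measure lebesgue T < \<delta>" by linarith
  have "\<forall>x. \<exists>r>0. x \<in> E \<longrightarrow> ball x r \<subseteq> T"
    using T(1,2) open_contains_ball by blast
  then obtain r where r: "\<And>x. r x > 0" "\<And>x. x \<in> E \<Longrightarrow> ball x (r x) \<subseteq> T" by metis
  define \<eta> where "\<eta> = e / (4 * (d - c + 1))"
  have eta: "\<eta> > 0" using e cd by (simp add: \<eta>_def)
  have "\<forall>x. \<exists>k>0. x \<in> {c..d} \<and> x \<notin> E \<longrightarrow>
      (\<forall>y\<in>{c..d}. norm (y - x) < k \<longrightarrow> norm (F y - F x - g x * (y - x)) \<le> \<eta> * norm (y - x))"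
  proof
    fix x
    show "\<exists>k>0. x \<in> {c..d} \<and> x \<notin> E \<longrightarrow>
      (\<forall>y\<in>{c..d}. norm (y - x) < k \<longrightarrow> norm (F y - F x - g x * (y - x)) \<le> \<eta> * norm (y - x))"
    proof (cases "x \<in> {c..d} \<and> x \<notin> E")
      case True
      have "(F has_derivative (\<lambda>y. g x * y)) (at x within {c..d})"
        using der[of x] True by (simp add: has_field_derivative_def)
      then have "\<forall>e>0. \<exists>k>0. \<forall>y\<in>{c..d}. norm (y - x) < k \<longrightarrow> norm (F y - F x - g x * (y - x)) \<le> e * norm (y - x)"
        unfolding has_derivative_within_alt by simp
      then obtain k where "k > 0" "\<forall>y\<in>{c..d}. norm (y - x) < k \<longrightarrow> norm (F y - F x - g x * (y - x)) \<le> \<eta> * norm (y - x)"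
        using eta by blast
      then show ?thesis by blast
    qed (use zero_less_one in blast)
  qed
  then obtain k where k: "\<And>x. k x > 0" "\<And>x y. x \<in> {c..d} \<Longrightarrow> x \<notin> E \<Longrightarrow> y \<in> {c..d} \<Longrightarrow> \<bar>y - x\<bar> < k x
       \<Longrightarrow> \<bar>F y - F x - g x * (y - x)\<bar> \<le> \<eta> * \<bar>y - x\<bar>"
    by (metis (no_types, lifting) real_norm_def)
  define \<gamma> where "\<gamma> = (\<lambda>x. ball x (if x \<in> E then r x else k x))"
  show "\<exists>\<gamma>. gauge \<gamma> \<and> (\<forall>\<D>. \<D> tagged_division_of {c..d} \<and> \<gamma> fine \<D> \<longrightarrow>
           norm ((\<Sum>(x, K)\<in>\<D>. hcontent K *\<^sub>R (if x \<in> E then 0 else g x)) - (F d - F c)) < e)"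
  proof (intro exI conjI allI impI)
    show "gauge \<gamma>" unfolding \<gamma>_def using r(1) k(1) by (intro gauge_ball_dependent) auto
  next
    fix p assume "p tagged_division_of {c..d} \<and> \<gamma> fine p"
    then have ptag: "p tagged_division_of {c..d}" and fine: "\<gamma> fine p" by auto
    note pd = tagged_division_ofD[OF ptag]
    have fin: "finite p" using pd(1) .
    have Fd: "F d - F c = (\<Sum>(x,K)\<in>p. F (Sup K) - F (Inf K))"
      using additive_tagged_division_1[OF cd ptag, of F] by simp
    define h where "h = (\<lambda>(x,K). hcontent K * g' x - (F (Sup K) - F (Inf K)))"
    have S: "(\<Sum>(x, K)\<in>p. hcontent K *\<^sub>R (if x \<in> E then 0 else g x)) - (F d - F c) = sum h p"
      unfolding Fd h_def g'_def by (simp add: split_def sum_subtractf)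
    define pN where "pN = {t \<in> p. fst t \<notin> E}"
    define pE where "pE = {t \<in> p. fst t \<in> E \<and> hcontent (snd t) \<noteq> 0}"
    define pZ where "pZ = {t \<in> p. fst t \<in> E \<and> hcontent (snd t) = 0}"
    have psplit: "p = pN \<union> pE \<union> pZ" unfolding pN_def pE_def pZ_def by auto
    have fins: "finite pN" "finite pE" "finite pZ" using fin unfolding pN_def pE_def pZ_def by auto
    have sumsplit: "sum h p = sum h pN + sum h pE + sum h pZ"
      unfolding psplit using fins
      by (subst sum.union_disjoint, auto simp: pN_def pE_def pZ_def)+
    have hZ: "sum h pZ = 0"
    proof (rule sum.neutral, clarify)
      fix x K assume xK: "(x, K) \<in> pZ"
      then have "(x,K) \<in> p" "hcontent K = 0" "x \<in> E" by (auto simp: pZ_def)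
      then obtain u v where uv: "K = {u..v}" "u \<le> v" using pd(2,4) by (metis atLeastAtMost_iff box_real(2) order.trans)
      with \<open>hcontent K = 0\<close> have "u = v" by simp
      then show "h (x, K) = 0" using uv \<open>hcontent K = 0\<close> \<open>x \<in> E\<close> by (simp add: h_def g'_def)
    qed
    have hN: "\<bar>sum h pN\<bar> \<le> e / 4"
    proof -
      have "\<bar>sum h pN\<bar> \<le> (\<Sum>t\<in>pN. \<bar>h t\<bar>)" by (rule sum_abs)
      also have "\<dots> \<le> (\<Sum>t\<in>pN. \<eta> * hcontent (snd t))"
      proof (rule sum_mono, clarify)
        fix x K assume xK: "(x, K) \<in> pN"
        then have xKp: "(x,K) \<in> p" and xE: "x \<notin> E" by (auto simp: pN_def)
        obtain u v where uv: "K = {u..v}" using pd(4)[OF xKp] by (metis box_real(2))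
        have xin: "x \<in> K" "K \<subseteq> {c..d}" using pd(2,3)[OF xKp] by auto
        then have "u \<le> v" "u \<le> x" "x \<le> v" using uv by auto
        have sub: "K \<subseteq> ball x (k x)" using fine xKp xE unfolding \<gamma>_def fine_def by force
        have "u \<in> K" "v \<in> K" using uv \<open>u \<le> v\<close> by auto
        then have "\<bar>u - x\<bar> < k x" "\<bar>v - x\<bar> < k x" using sub by (auto simp: dist_real_def)
        moreover have "u \<in> {c..d}" "v \<in> {c..d}" "x \<in> {c..d}" using xin \<open>u \<in> K\<close> \<open>v \<in> K\<close> by auto
        ultimately have A: "\<bar>F u - F x - g x * (u - x)\<bar> \<le> \<eta> * \<bar>u - x\<bar>"
                    and B: "\<bar>F v - F x - g x * (v - x)\<bar> \<le> \<eta> * \<bar>v - x\<bar>"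
          using k(2)[of x u] k(2)[of x v] xE by auto
        have "h (x,K) = (F u - F x - g x * (u - x)) - (F v - F x - g x * (v - x))"
          using uv \<open>u \<le> v\<close> xE by (simp add: h_def g'_def algebra_simps)
        then have "\<bar>h (x,K)\<bar> \<le> \<eta> * \<bar>u - x\<bar> + \<eta> * \<bar>v - x\<bar>" using A B by linarith
        also have "\<dots> = \<eta> * (v - u)" using \<open>u \<le> x\<close> \<open>x \<le> v\<close> by (simp add: algebra_simps)
        finally show "\<bar>h (x,K)\<bar> \<le> \<eta> * hcontent (snd (x, K))" using uv \<open>u \<le> v\<close> by simp
      qed
      also have "\<dots> = \<eta> * (\<Sum>t\<in>pN. hcontent (snd t))" by (simp add: sum_distrib_left)
      also have "\<dots> \<le> \<eta> * (d - c)"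
      proof -
        have "(\<Sum>t\<in>pN. hcontent (snd t)) \<le> (\<Sum>t\<in>p. hcontent (snd t))"
          using fin by (intro sum_mono2) (auto simp: pN_def)
        also have "\<dots> = (\<Sum>(x,K)\<in>p. hcontent K)" by (simp add: split_def)
        also have "\<dots> = hcontent {c..d}" using additive_content_tagged_division[OF ptag[unfolded box_real(2)[symmetric]]] by (simp)
        finally show ?thesis using eta cd by (simp add: mult_left_mono)
      qed
      also have "\<dots> \<le> e / 4" using cd e unfolding \<eta>_def by (simp add: field_simps)
      finally show ?thesis .
    qed
    have hE: "\<bar>sum h pE\<bar> < e / 2"
    proof -
      have cK: "\<And>x K. (x,K) \<in> pE \<Longrightarrow> \<exists>u v. K = {u..v} \<and> u < v \<and> c \<le> u \<and> v \<le> d"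
      proof -
        fix x K assume "(x,K) \<in> pE"
        then have xKp: "(x,K) \<in> p" and c0: "hcontent K \<noteq> 0" by (auto simp: pE_def)
        obtain u v where uv: "K = {u..v}" using pd(4)[OF xKp] by (metis box_real(2))
        have "x \<in> K" "K \<subseteq> {c..d}" using pd(2,3)[OF xKp] by auto
        then have "u \<le> v" using uv by auto
        with c0 uv have "u < v" by (cases "u = v") auto
        then show "\<exists>u v. K = {u..v} \<and> u < v \<and> c \<le> u \<and> v \<le> d" using uv \<open>K \<subseteq> {c..d}\<close> by auto
      qed
      have habs: "\<bar>h t\<bar> = \<bar>F (Sup (snd t)) - F (Inf (snd t))\<bar>" if "t \<in> pE" for t
        using that by (auto simp: h_def g'_def pE_def split_def)
      have "\<bar>sum h pE\<bar> \<le> (\<Sum>t\<in>pE. \<bar>h t\<bar>)" by (rule sum_abs)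
      also have "\<dots> = (\<Sum>t\<in>pE. \<bar>F (Sup (snd t)) - F (Inf (snd t))\<bar>)" using habs by simp
      also have "\<dots> < e/2"
      proof (rule AC[OF fins(2)])
        show "\<forall>i\<in>pE. c \<le> Inf (snd i) \<and> Inf (snd i) \<le> Sup (snd i) \<and> Sup (snd i) \<le> d"
          using cK by fastforce
        show "\<forall>i\<in>pE. \<forall>j\<in>pE. i \<noteq> j \<longrightarrow> Sup (snd i) \<le> Inf (snd j) \<or> Sup (snd j) \<le> Inf (snd i)"
        proof (intro ballI impI)
          fix i j assume ij: "i \<in> pE" "j \<in> pE" "i \<noteq> j"
          obtain x K y L where i: "i = (x,K)" and j: "j = (y,L)" by fastforce
          obtain u1 v1 where 1: "K = {u1..v1}" "u1 < v1" using cK ij(1) i by blast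
          obtain u2 v2 where 2: "L = {u2..v2}" "u2 < v2" using cK ij(2) j by blast
          have "interior K \<inter> interior L = {}" using pd(5)[of x K y L] ij i j by (auto simp: pE_def)
          then have "{u1<..<v1} \<inter> {u2<..<v2} = {}" using 1 2 by simp
          from interior_disj_order[OF 1(2) 2(2) this]
          show "Sup (snd i) \<le> Inf (snd j) \<or> Sup (snd j) \<le> Inf (snd i)" using 1 2 i j by simp
        qed
        show "(\<Sum>i\<in>pE. Sup (snd i) - Inf (snd i)) < \<delta>"
        proof -
          have inj: "inj_on snd pE"
          proof (rule inj_onI)
            fix i j assume ij: "i \<in> pE" "j \<in> pE" "snd i = snd j"
            show "i = j"
            proof (rule ccontr)
              assume "i \<noteq> j"
              obtain x K y L where i: "i = (x,K)" and j: "j = (y,L)" by fastforce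
              obtain u1 v1 where 1: "K = {u1..v1}" "u1 < v1" using cK ij(1) i by blast
              have "interior K \<inter> interior L = {}" using pd(5)[of x K y L] ij i j \<open>i \<noteq> j\<close> by (auto simp: pE_def)
              then show False using ij i j 1 by auto
            qed
          qed
          have "(\<Sum>i\<in>pE. Sup (snd i) - Inf (snd i)) = (\<Sum>i\<in>pE. measure lebesgue (snd i))"
            by (rule sum.cong) (use cK in force)+
          also have "\<dots> = (\<Sum>K\<in>snd ` pE. measure lebesgue K)" using sum.reindex[OF inj, of "measure lebesgue"] by (simp add: comp_def)
          also have "\<dots> = measure lebesgue (\<Union>(snd ` pE))"
          proof (rule content_division)
            have "snd ` p division_of \<Union>(snd ` p)" using division_of_tagged_division[OF ptag] division_ofD(6)[OF division_of_tagged_division[OF ptag]] by simp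
            then show "snd ` pE division_of \<Union>(snd ` pE)"
              by (rule division_of_subset) (auto simp: pE_def)
          qed
          also have "\<dots> \<le> measure lebesgue T"
          proof (rule measure_mono_fmeasurable[OF _ _ Tlm])
            show "\<Union>(snd ` pE) \<subseteq> T"
            proof clarify
              fix z x K assume xK: "(x,K) \<in> pE" "z \<in> snd (x, K)"
              then have "(x,K) \<in> p" "x \<in> E" by (auto simp: pE_def)
              then have "K \<subseteq> ball x (r x)" using fine unfolding \<gamma>_def fine_def by force
              then show "z \<in> T" using r(2)[OF \<open>x \<in> E\<close>] xK by auto
            qed
            have "snd ` p division_of \<Union>(snd ` p)" using division_of_tagged_division[OF ptag] division_ofD(6)[OF division_of_tagged_division[OF ptag]] by simp
            then have "snd ` pE division_of \<Union>(snd ` pE)"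
              by (rule division_of_subset) (auto simp: pE_def)
            then show "\<Union>(snd ` pE) \<in> sets lebesgue" using lmeasurable_division by blast
          qed
          finally show ?thesis using mT by linarith
        qed
      qed
      finally show ?thesis .
    qed
    show "norm ((\<Sum>(x, K)\<in>p. hcontent K *\<^sub>R (if x \<in> E then 0 else g x)) - (F d - F c)) < e"
      using S sumsplit hZ hN hE by simp
  qed
qed

lemma ac_sub:
  assumes "absolutely_continuous_real_on f a b" "a \<le> c" "d \<le> b"
  shows "absolutely_continuous_real_on f c d"
  unfolding absolutely_continuous_real_on_def
proof (intro allI impI)
  fix e :: real assume e: "e > 0"
  obtain \<delta> where "\<delta> > 0" and H: "\<forall>(n::nat) (u::nat \<Rightarrow> real) (v::nat \<Rightarrow> real).
        (\<forall>k<n. a \<le> u k \<and> u k \<le> v k \<and> v k \<le> b) \<longrightarrow>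
        (\<forall>i<n. \<forall>j<n. i \<noteq> j \<longrightarrow> v i \<le> u j \<or> v j \<le> u i) \<longrightarrow>
        (\<Sum>k<n. v k - u k) < \<delta> \<longrightarrow>
        (\<Sum>k<n. \<bar>f (v k) - f (u k)\<bar>) < e"
    using assms(1)[unfolded absolutely_continuous_real_on_def, THEN spec[of _ e]] e by (elim impE exE conjE) auto
  show "\<exists>\<delta>>0. \<forall>(n::nat) (u::nat \<Rightarrow> real) (v::nat \<Rightarrow> real).
        (\<forall>k<n. c \<le> u k \<and> u k \<le> v k \<and> v k \<le> d) \<longrightarrow>
        (\<forall>i<n. \<forall>j<n. i \<noteq> j \<longrightarrow> v i \<le> u j \<or> v j \<le> u i) \<longrightarrow>
        (\<Sum>k<n. v k - u k) < \<delta> \<longrightarrow>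
        (\<Sum>k<n. \<bar>f (v k) - f (u k)\<bar>) < e"
  proof (intro exI[of _ \<delta>] conjI allI impI)
    show "\<delta> > 0" by fact
    fix n :: nat and u v :: "nat \<Rightarrow> real"
    assume 1: "\<forall>k<n. c \<le> u k \<and> u k \<le> v k \<and> v k \<le> d"
      and 2: "\<forall>i<n. \<forall>j<n. i \<noteq> j \<longrightarrow> v i \<le> u j \<or> v j \<le> u i" and 3: "(\<Sum>k<n. v k - u k) < \<delta>"
    have h1a: "\<forall>k<n. a \<le> u k \<and> u k \<le> v k \<and> v k \<le> b" using 1 assms(2,3) by force
    show "(\<Sum>k<n. \<bar>f (v k) - f (u k)\<bar>) < e" using H[THEN spec[of _ n], THEN spec[of _ u], THEN spec[of _ v]] h1a 2 3 by blast
  qed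
qed

lemma ac_cont:
  assumes ac: "absolutely_continuous_real_on f a b"
  shows "continuous_on {a..b} f"
  unfolding continuous_on_iff
proof (intro ballI allI impI)
  fix x e :: real assume x: "x \<in> {a..b}" and e: "e > 0"
  obtain \<delta> where "\<delta> > 0" and H: "\<forall>(n::nat) (u::nat \<Rightarrow> real) (v::nat \<Rightarrow> real).
        (\<forall>k<n. a \<le> u k \<and> u k \<le> v k \<and> v k \<le> b) \<longrightarrow>
        (\<forall>i<n. \<forall>j<n. i \<noteq> j \<longrightarrow> v i \<le> u j \<or> v j \<le> u i) \<longrightarrow>
        (\<Sum>k<n. v k - u k) < \<delta> \<longrightarrow>
        (\<Sum>k<n. \<bar>f (v k) - f (u k)\<bar>) < e"
    using ac[unfolded absolutely_continuous_real_on_def, THEN spec[of _ e]] e by (elim impE exE conjE) auto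
  show "\<exists>d>0. \<forall>x'\<in>{a..b}. dist x' x < d \<longrightarrow> dist (f x') (f x) < e"
  proof (intro exI[of _ \<delta>] conjI ballI impI)
    show "\<delta> > 0" by fact
    fix y assume y: "y \<in> {a..b}" and dy: "dist y x < \<delta>"
    have "(\<Sum>k<Suc 0. \<bar>f ((\<lambda>_. max x y) k) - f ((\<lambda>_. min x y) k)\<bar>) < e"
      using H[THEN spec[of _ "Suc 0"], THEN spec[of _ "\<lambda>_. min x y"], THEN spec[of _ "\<lambda>_. max x y"]] x y dy
      by (auto simp: dist_real_def)
    then show "dist (f y) (f x) < e" by (cases "x \<le> y") (auto simp: dist_real_def max_def min_def abs_minus_commute)
  qed
qed

lemma ac_mult_lin:
  assumes ac: "absolutely_continuous_real_on f a b"
  shows "absolutely_continuous_real_on (\<lambda>t. (t - m) * f t) a b"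
  unfolding absolutely_continuous_real_on_def
proof (intro allI impI)
  fix e :: real assume e: "e > 0"
  have "bounded (f ` {a..b})" using compact_imp_bounded[OF compact_continuous_image[OF ac_cont[OF ac] compact_Icc]] .
  then obtain M where M: "M > 0" "\<And>t. t \<in> {a..b} \<Longrightarrow> \<bar>f t\<bar> \<le> M"
    unfolding bounded_pos by auto
  define K where "K = \<bar>a - m\<bar> + \<bar>b - m\<bar> + 1"
  have K: "K > 0" "\<And>t. t \<in> {a..b} \<Longrightarrow> \<bar>t - m\<bar> \<le> K" unfolding K_def by auto
  have e2: "e / (2*K) > 0" using e K by simp
  obtain \<delta> where "\<delta> > 0" and H: "\<forall>(n::nat) (u::nat \<Rightarrow> real) (v::nat \<Rightarrow> real).
        (\<forall>k<n. a \<le> u k \<and> u k \<le> v k \<and> v k \<le> b) \<longrightarrow>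
        (\<forall>i<n. \<forall>j<n. i \<noteq> j \<longrightarrow> v i \<le> u j \<or> v j \<le> u i) \<longrightarrow>
        (\<Sum>k<n. v k - u k) < \<delta> \<longrightarrow>
        (\<Sum>k<n. \<bar>f (v k) - f (u k)\<bar>) < e / (2*K)"
    using ac[unfolded absolutely_continuous_real_on_def, THEN spec[of _ "e/(2*K)"]] e2 by (elim impE exE conjE) auto
  show "\<exists>\<delta>>0. \<forall>(n::nat) (u::nat \<Rightarrow> real) (v::nat \<Rightarrow> real).
        (\<forall>k<n. a \<le> u k \<and> u k \<le> v k \<and> v k \<le> b) \<longrightarrow>
        (\<forall>i<n. \<forall>j<n. i \<noteq> j \<longrightarrow> v i \<le> u j \<or> v j \<le> u i) \<longrightarrow>
        (\<Sum>k<n. v k - u k) < \<delta> \<longrightarrow>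
        (\<Sum>k<n. \<bar>(v k - m) * f (v k) - (u k - m) * f (u k)\<bar>) < e"
  proof (intro exI[of _ "min \<delta> (e/(2*M))"] conjI allI impI)
    show "min \<delta> (e/(2*M)) > 0" using \<open>\<delta> > 0\<close> e M by simp
    fix n :: nat and u v :: "nat \<Rightarrow> real"
    assume 1: "\<forall>k<n. a \<le> u k \<and> u k \<le> v k \<and> v k \<le> b"
      and 2: "\<forall>i<n. \<forall>j<n. i \<noteq> j \<longrightarrow> v i \<le> u j \<or> v j \<le> u i" and 3: "(\<Sum>k<n. v k - u k) < min \<delta> (e/(2*M))"
    have s1: "(\<Sum>k<n. \<bar>f (v k) - f (u k)\<bar>) < e / (2*K)"
      using H[THEN spec[of _ n], THEN spec[of _ u], THEN spec[of _ v]] 1 2 3 by simp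
    have pw: "\<bar>(v k - m) * f (v k) - (u k - m) * f (u k)\<bar> \<le> K * \<bar>f (v k) - f (u k)\<bar> + M * (v k - u k)"
      if k: "k < n" for k
    proof -
      have uv: "u k \<in> {a..b}" "v k \<in> {a..b}" "u k \<le> v k" using 1 k by auto
      have "(v k - m) * f (v k) - (u k - m) * f (u k) = (v k - m) * (f (v k) - f (u k)) + (v k - u k) * f (u k)"
        by (simp add: algebra_simps)
      then have "\<bar>(v k - m) * f (v k) - (u k - m) * f (u k)\<bar> \<le> \<bar>(v k - m) * (f (v k) - f (u k))\<bar> + \<bar>(v k - u k) * f (u k)\<bar>"
        by (simp only: abs_triangle_ineq)
      also have "\<dots> = \<bar>v k - m\<bar> * \<bar>f (v k) - f (u k)\<bar> + (v k - u k) * \<bar>f (u k)\<bar>"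
        using uv(3) by (simp add: abs_mult)
      also have "\<dots> \<le> K * \<bar>f (v k) - f (u k)\<bar> + M * (v k - u k)"
      proof (rule add_mono)
        show "\<bar>v k - m\<bar> * \<bar>f (v k) - f (u k)\<bar> \<le> K * \<bar>f (v k) - f (u k)\<bar>"
          using K(2)[OF uv(2)] by (intro mult_right_mono) auto
        show "(v k - u k) * \<bar>f (u k)\<bar> \<le> M * (v k - u k)"
          using M(2)[OF uv(1)] uv(3) by (simp add: mult.commute mult_right_mono)
      qed
      finally show ?thesis .
    qed
    have "(\<Sum>k<n. \<bar>(v k - m) * f (v k) - (u k - m) * f (u k)\<bar>) \<le> (\<Sum>k<n. K * \<bar>f (v k) - f (u k)\<bar> + M * (v k - u k))"
      using pw by (intro sum_mono) auto
    also have "\<dots> = K * (\<Sum>k<n. \<bar>f (v k) - f (u k)\<bar>) + M * (\<Sum>k<n. v k - u k)"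
      by (simp add: sum.distrib sum_distrib_left)
    also have "\<dots> < K * (e / (2*K)) + M * (e/(2*M))"
      using s1 3 K M by (intro add_strict_mono mult_strict_left_mono) auto
    also have "\<dots> = e" using K M by (simp add: field_simps)
    finally show "(\<Sum>k<n. \<bar>(v k - m) * f (v k) - (u k - m) * f (u k)\<bar>) < e" .
  qed
qed

lemma amgm_abs:
  fixes x y l :: real assumes "l > 0"
  shows "\<bar>x * y\<bar> \<le> l/2 * x^2 + 1/(2*l) * y^2"
proof -
  have "0 \<le> (l * \<bar>x\<bar> - \<bar>y\<bar>)^2" by simp
  then have "2*l*\<bar>x*y\<bar> \<le> l^2 * x^2 + y^2"
    by (simp add: power2_eq_square abs_mult algebra_simps)
  then have "2*l*\<bar>x*y\<bar> / (2*l) \<le> (l^2 * x^2 + y^2) / (2*l)"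
    using assms by (intro divide_right_mono) auto
  also have "(l^2 * x^2 + y^2) / (2*l) = l/2 * x^2 + 1/(2*l) * y^2"
    using assms by (simp add: field_simps power2_eq_square)
  finally show ?thesis using assms by simp
qed

lemma poly_int1:
  fixes u v m :: real assumes "u \<le> v"
  shows "((\<lambda>t. t - m) has_integral ((v-m)^2/2 - (u-m)^2/2)) {u..v}"
proof -
  have "((\<lambda>t. t - m) has_integral ((\<lambda>t. (t-m)^2/2) v - (\<lambda>t. (t-m)^2/2) u)) {u..v}"
  proof (rule fundamental_theorem_of_calculus[OF assms])
    fix x assume "x \<in> {u..v}"
    show "((\<lambda>t. (t-m)^2/2) has_vector_derivative (x - m)) (at x within {u..v})"
      unfolding has_real_derivative_iff_has_vector_derivative[symmetric]
      by (auto intro!: derivative_eq_intros)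
  qed
  then show ?thesis by simp
qed

lemma poly_int2:
  fixes u v m :: real assumes "u \<le> v"
  shows "((\<lambda>t. (t - m)^2) has_integral ((v-m)^3/3 - (u-m)^3/3)) {u..v}"
proof -
  have "((\<lambda>t. (t - m)^2) has_integral ((\<lambda>t. (t-m)^3/3) v - (\<lambda>t. (t-m)^3/3) u)) {u..v}"
  proof (rule fundamental_theorem_of_calculus[OF assms])
    fix x assume "x \<in> {u..v}"
    show "((\<lambda>t. (t-m)^3/3) has_vector_derivative ((x - m)^2)) (at x within {u..v})"
      unfolding has_real_derivative_iff_has_vector_derivative[symmetric]
      by (auto intro!: derivative_eq_intros)
  qed
  then show ?thesis by simp
qed

lemma piece_bound:
  fixes g :: "real \<Rightarrow> real"
  assumes uv: "u \<le> v" and J: "((\<lambda>t. (t - m) * g t) has_integral J) {u..v}"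
    and hi: "((\<lambda>t. (g t - C)^2) has_integral I) {u..v}" and lam: "l > 0"
  shows "\<bar>J - C * ((v-m)^2/2 - (u-m)^2/2)\<bar> \<le> l/2 * ((v-m)^3/3 - (u-m)^3/3) + 1/(2*l) * I"
proof -
  have h1: "((\<lambda>t. (t - m) * g t - C * (t - m)) has_integral (J - C * ((v-m)^2/2 - (u-m)^2/2))) {u..v}"
    by (intro has_integral_diff J has_integral_mult_right poly_int1 uv)
  have h1': "((\<lambda>t. (t - m) * (g t - C)) has_integral (J - C * ((v-m)^2/2 - (u-m)^2/2))) {u..v}"
    using h1 by (simp add: algebra_simps)
  have h2: "((\<lambda>t. l/2 * (t - m)^2 + 1/(2*l) * (g t - C)^2) has_integral
      (l/2 * ((v-m)^3/3 - (u-m)^3/3) + 1/(2*l) * I)) {u..v}"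
    by (intro has_integral_add has_integral_mult_right poly_int2 uv hi)
  have pw: "\<bar>(t - m) * (g t - C)\<bar> \<le> l/2 * (t - m)^2 + 1/(2*l) * (g t - C)^2" for t
    by (rule amgm_abs[OF lam])
  have pw1: "(t - m) * (g t - C) \<le> l/2 * (t - m)^2 + 1/(2*l) * (g t - C)^2" for t
    using pw[of t] by (simp add: abs_le_iff)
  have pw2: "- ((t - m) * (g t - C)) \<le> l/2 * (t - m)^2 + 1/(2*l) * (g t - C)^2" for t
    using pw[of t] by (simp add: abs_le_iff)
  have a: "J - C * ((v-m)^2/2 - (u-m)^2/2) \<le> l/2 * ((v-m)^3/3 - (u-m)^3/3) + 1/(2*l) * I"
    by (rule has_integral_le[OF h1' h2]) (rule pw1)
  have b: "-(J - C * ((v-m)^2/2 - (u-m)^2/2)) \<le> l/2 * ((v-m)^3/3 - (u-m)^3/3) + 1/(2*l) * I"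
    by (rule has_integral_le[OF has_integral_neg[OF h1'] h2]) (rule pw2)
  show ?thesis using a b by linarith
qed

lemma final_alg:
  fixes D w \<sigma> :: real
  assumes w: "w > 0" and H: "\<And>l. l > 0 \<Longrightarrow> \<bar>D\<bar> * w \<le> l * (w^3/96) + 1/(2*l) * \<sigma>"
  shows "\<bar>D\<bar> \<le> sqrt w / (4 * sqrt 3) * sqrt \<sigma>"
proof -
  define A where "A = w^3/96"
  have A: "A > 0" using w by (simp add: A_def)
  define X where "X = \<bar>D\<bar> * w"
  have X0: "X \<ge> 0" using w by (simp add: X_def)
  have HX: "\<And>l. l > 0 \<Longrightarrow> X \<le> l * A + 1/(2*l) * \<sigma>" using H by (simp add: X_def A_def)
  have sig: "\<sigma> \<ge> 0"
  proof (rule ccontr)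
    assume "\<not> \<sigma> \<ge> 0"
    then have s: "\<sigma> < 0" by simp
    define l where "l = sqrt (-\<sigma>/(4*A))"
    have q: "-\<sigma>/(4*A) > 0" using s A by (intro divide_pos_pos) auto
    have l: "l > 0" using q by (simp add: l_def)
    have l2: "l^2 = -\<sigma>/(4*A)" using q by (simp add: l_def)
    have "l * A + 1/(2*l) * \<sigma> = (2 * l^2 * A + \<sigma>) / (2*l)"
      using l by (simp add: field_simps power2_eq_square)
    also have "\<dots> = (\<sigma>/2) / (2*l)" using A by (simp add: l2 field_simps)
    also have "\<dots> < 0" using s l by (simp add: divide_neg_pos)
    finally show False using HX[OF l] X0 by linarith
  qed
  have X2: "X^2 \<le> 2 * A * \<sigma>"
  proof (cases "X = 0")
    case True then show ?thesis using A sig by simp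
  next
    case False
    then have Xp: "X > 0" using X0 by simp
    define l where "l = X / (2*A)"
    have l: "l > 0" using Xp A by (simp add: l_def)
    have "X \<le> X/2 + A * \<sigma> / X" using HX[OF l] A Xp by (simp add: l_def field_simps)
    then have "X * X \<le> (X/2 + A * \<sigma> / X) * X" using Xp by (simp add: mult_right_mono)
    also have "\<dots> = X*X/2 + A * \<sigma>" using Xp by (simp add: field_simps)
    finally show ?thesis by (simp add: power2_eq_square)
  qed
  have "\<bar>D\<bar>^2 * w^2 \<le> w^3 * \<sigma> / 48" using X2 by (simp add: X_def A_def power_mult_distrib)
  then have "\<bar>D\<bar>^2 \<le> w * \<sigma> / 48" using w by (simp add: field_simps power2_eq_square power3_eq_cube)
  then have "\<bar>D\<bar> \<le> sqrt (w * \<sigma> / 48)" by (rule real_le_rsqrt)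
  also have "sqrt (w * \<sigma> / 48) = sqrt w / (4 * sqrt 3) * sqrt \<sigma>"
  proof -
    have "sqrt 48 = 4 * sqrt (3::real)"
      using real_sqrt_mult[of 16 3] by simp
    then show ?thesis by (simp add: real_sqrt_mult real_sqrt_divide)
  qed
  finally show ?thesis .
qed

theorem corollary2p9:
  fixes f f' :: "real \<Rightarrow> real" and a b :: real
  assumes "a < b"
    and "absolutely_continuous_real_on f a b"
    and "AE t in lebesgue_on {a..b}. (f has_real_derivative f' t) (at t)"
    and "f' \<in> borel_measurable (lebesgue_on {a..b})"
    and "integrable (lebesgue_on {a..b}) (\<lambda>t. (f' t)\<^sup>2)"
  shows "\<bar>(f ((3*a + b)/4) + f ((a + 3*b)/4)) / 2 - (1/(b - a)) * integral {a..b} f\<bar>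
           \<le> sqrt (b - a) / (4 * sqrt 3)
             * sqrt ((LINT t|lebesgue_on {a..b}. (f' t)\<^sup>2) - (f b - f a)\<^sup>2 / (b - a))"
proof -
  note ac = assms(2)
  have ab: "a \<le> b" using assms(1) by simp
  obtain N where N: "N \<in> null_sets (lebesgue_on {a..b})"
    and NP: "{x \<in> space (lebesgue_on {a..b}). \<not> (f has_real_derivative f' x) (at x)} \<subseteq> N"
    using assms(3) unfolding eventually_ae_filter by blast
  have Nleb: "N \<in> null_sets lebesgue" using N null_sets_restrict_space[of "{a..b}" lebesgue N] by auto
  have negN: "negligible N" using Nleb negligible_iff_null_sets by blast
  have der: "(f has_real_derivative f' x) (at x)" if "x \<in> {a..b}" "x \<notin> N" for x
    using NP that by auto
  define g0 where "g0 = (\<lambda>t. if t \<in> N then 0 else f' t)"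
  have cont: "continuous_on {a..b} f" by (rule ac_cont[OF ac])
  have P2: "((\<lambda>t. (t - m) * g0 t + f t) has_integral ((v - m) * f v - (u - m) * f u)) {u..v}"
    if uv: "a \<le> u" "u \<le> v" "v \<le> b" for u v m
  proof -
    have acm: "absolutely_continuous_real_on (\<lambda>t. (t - m) * f t) u v"
      by (rule ac_sub[OF ac_mult_lin[OF ac] uv(1) uv(3)])
    have dd: "((\<lambda>t. (t - m) * f t) has_real_derivative ((x - m) * f' x + f x)) (at x within {u..v})"
      if "x \<in> {u..v}" "x \<notin> N" for x
    proof -
      have "x \<in> {a..b}" using that uv by auto
      then have d1: "(f has_real_derivative f' x) (at x)" using der that by blast
      have "((\<lambda>t. (t - m) * f t) has_real_derivative ((x - m) * f' x + f x)) (at x)"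
        using d1 by (auto intro!: derivative_eq_intros simp: algebra_simps)
      then show ?thesis by (rule has_field_derivative_at_within)
    qed
    have "((\<lambda>t. if t \<in> N then 0 else (t - m) * f' t + f t) has_integral ((v - m) * f v - (u - m) * f u)) {u..v}"
      using ftc_ac[OF uv(2) acm negN dd] by simp
    then show ?thesis
      by (rule has_integral_spike[OF negN, rotated]) (simp add: g0_def)
  qed
  have P1: "(g0 has_integral (f v - f u)) {u..v}"
    if uv: "a \<le> u" "u \<le> v" "v \<le> b" for u v
  proof -
    have dd: "(f has_real_derivative f' x) (at x within {u..v})"
      if "x \<in> {u..v}" "x \<notin> N" for x
      by (rule has_field_derivative_at_within[OF der[OF _ that(2)]]) (use that uv in auto)
    have "((\<lambda>t. if t \<in> N then 0 else f' t) has_integral (f v - f u)) {u..v}"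
      using ftc_ac[OF uv(2) ac_sub[OF ac uv(1) uv(3)] negN dd] by simp
    then show ?thesis by (simp add: g0_def)
  qed
  have fI: "f integrable_on {u..v}" if "a \<le> u" "v \<le> b" for u v
    using that by (intro integrable_continuous_real continuous_on_subset[OF cont]) auto
  have J: "((\<lambda>t. (t - m) * g0 t) has_integral ((v - m) * f v - (u - m) * f u - integral {u..v} f)) {u..v}"
    if uv: "a \<le> u" "u \<le> v" "v \<le> b" for u v m
    using has_integral_diff[OF P2[OF uv, of m] integrable_integral[OF fI[OF uv(1) uv(3)]]] by simp
  define Q where "Q = (LINT t|lebesgue_on {a..b}. (f' t)\<^sup>2)"
  have HQ: "((\<lambda>t. (g0 t)^2) has_integral Q) {a..b}"
    unfolding Q_def
    by (rule has_integral_spike[OF negN _ has_integral_integral_lebesgue_on[OF assms(5)]]) (auto simp: g0_def)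
  define w where "w = b - a"
  have w: "w > 0" using assms(1) by (simp add: w_def)
  define C where "C = (f b - f a) / w"
  define \<sigma> where "\<sigma> = Q - (f b - f a)\<^sup>2 / (b - a)"
  have Hs0: "((\<lambda>t. (g0 t)^2 - (2*C) * g0 t + C^2) has_integral (Q - (2*C) * (f b - f a) + (b - a) * C^2)) {a..b}"
    using has_integral_add[OF has_integral_diff[OF HQ has_integral_mult_right[OF P1[OF order.refl ab order.refl]]]
        has_integral_const_real[of "C^2" a b]] ab by simp
  have sval: "Q - (2*C) * (f b - f a) + (b - a) * C^2 = \<sigma>"
  proof -
    have Cw: "f b - f a = C * w" using w by (simp add: C_def)
    have e1: "(f b - f a)^2/(b-a) = C^2 * w"
    proof -
      have "(f b - f a)^2/(b-a) = (C*w)^2/w" using Cw w_def by simp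
      also have "\<dots> = C^2*w" using w by (simp add: power2_eq_square)
      finally show ?thesis .
    qed
    have bw: "b - a = w" by (simp add: w_def)
    show ?thesis unfolding \<sigma>_def e1 Cw bw by (simp add: power2_eq_square algebra_simps)
  qed
  have Hs: "((\<lambda>t. (g0 t - C)^2) has_integral \<sigma>) {a..b}"
    using Hs0 unfolding sval by (simp add: power2_eq_square algebra_simps)
  have hint: "(\<lambda>t. (g0 t - C)^2) integrable_on {u..v}" if "a \<le> u" "v \<le> b" for u v
    using integrable_subinterval_real[OF has_integral_integrable[OF Hs]] that by auto
  define x1 where "x1 = (3*a + b)/4"
  define x2 where "x2 = (a + 3*b)/4"
  define mid where "mid = (a + b)/2"
  have ord: "a \<le> x1" "x1 \<le> x2" "x2 \<le> b" "x1 \<le> b" using assms(1) by (simp_all add: x1_def x2_def)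
  define h2 where "h2 = (\<lambda>t. (g0 t - C)^2)"
  define I1 where "I1 = integral {a..x1} h2"
  define I2 where "I2 = integral {x1..x2} h2"
  define I3 where "I3 = integral {x2..b} h2"
  have Isum: "I1 + I2 + I3 = \<sigma>"
  proof -
    have hI: "h2 integrable_on {a..b}" unfolding h2_def using has_integral_integrable[OF Hs] .
    have "integral {x1..b} h2 = I2 + I3" unfolding I2_def I3_def
      using Henstock_Kurzweil_Integration.integral_combine[OF ord(2) ord(3) integrable_subinterval_real[OF hI]] ord by auto
    moreover have "I1 + integral {x1..b} h2 = integral {a..b} h2" unfolding I1_def
      using Henstock_Kurzweil_Integration.integral_combine[OF ord(1) ord(4) hI] by simp
    moreover have "integral {a..b} h2 = \<sigma>" using Hs unfolding h2_def by (rule integral_unique)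
    ultimately show ?thesis by simp
  qed
  have fsum: "integral {a..x1} f + integral {x1..x2} f + integral {x2..b} f = integral {a..b} f"
  proof -
    have hI: "f integrable_on {a..b}" using fI by simp
    have "integral {x1..b} f = integral {x1..x2} f + integral {x2..b} f"
      using Henstock_Kurzweil_Integration.integral_combine[OF ord(2) ord(3) integrable_subinterval_real[OF hI]] ord by auto
    moreover have "integral {a..x1} f + integral {x1..b} f = integral {a..b} f"
      using Henstock_Kurzweil_Integration.integral_combine[OF ord(1) ord(4) hI] by simp
    ultimately show ?thesis by simp
  qed
  define D where "D = (f x1 + f x2) / 2 - (1/(b - a)) * integral {a..b} f"
  have key: "\<bar>D\<bar> * w \<le> l * (w^3/96) + 1/(2*l) * \<sigma>" if l: "l > 0" for l
  proof -
    have ax2: "a \<le> x2" using ord by linarith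
    have h1: "(h2 has_integral I1) {a..x1}" unfolding I1_def h2_def by (rule integrable_integral[OF hint[OF order.refl ord(4)]])
    have h2': "(h2 has_integral I2) {x1..x2}" unfolding I2_def h2_def by (rule integrable_integral[OF hint[OF ord(1) ord(3)]])
    have h3: "(h2 has_integral I3) {x2..b}" unfolding I3_def h2_def by (rule integrable_integral[OF hint[OF ax2 order.refl]])
    note B1 = piece_bound[OF ord(1) J[OF order.refl ord(1) ord(4), of a] h1[unfolded h2_def] l]
    note B2 = piece_bound[OF ord(2) J[OF ord(1) ord(2) ord(3), of mid] h2'[unfolded h2_def] l]
    note B3 = piece_bound[OF ord(3) J[OF ax2 ord(3) order.refl, of b] h3[unfolded h2_def] l]
    define T1 where "T1 = (x1 - a) * f x1 - (a - a) * f a - integral {a..x1} f - C * ((x1 - a)\<^sup>2 / 2 - (a - a)\<^sup>2 / 2)"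
    define T2 where "T2 = (x2 - mid) * f x2 - (x1 - mid) * f x1 - integral {x1..x2} f - C * ((x2 - mid)\<^sup>2 / 2 - (x1 - mid)\<^sup>2 / 2)"
    define T3 where "T3 = (b - b) * f b - (x2 - b) * f x2 - integral {x2..b} f - C * ((b - b)\<^sup>2 / 2 - (x2 - b)\<^sup>2 / 2)"
    have cs: "x1 - a = w/4" "x2 - mid = w/4" "x1 - mid = -(w/4)" "x2 - b = -(w/4)"
      by (simp_all add: x1_def x2_def mid_def w_def field_simps)
    have Dw: "D * w = T1 + T2 + T3"
    proof -
      have "D * w = (f x1 + f x2) / 2 * w - integral {a..b} f"
        unfolding D_def using w by (simp add: w_def field_simps)
      also have "\<dots> = T1 + T2 + T3"
        unfolding fsum[symmetric] T1_def T2_def T3_def cs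
        by (simp add: field_simps power2_eq_square)
      finally show ?thesis .
    qed
    have cub: "l/2 * ((x1 - a)^3/3 - (a - a)^3/3) + l/2 * ((x2 - mid)^3/3 - (x1 - mid)^3/3)
        + l/2 * ((b - b)^3/3 - (x2 - b)^3/3) = l * (w^3/96)"
      unfolding cs by (simp add: field_simps power3_eq_cube)
    have "\<bar>D\<bar> * w = \<bar>T1 + T2 + T3\<bar>" using w by (simp add: Dw[symmetric] abs_mult)
    also have "\<dots> \<le> \<bar>T1\<bar> + \<bar>T2\<bar> + \<bar>T3\<bar>" by linarith
    also have "\<dots> \<le> l * (w^3/96) + 1/(2*l) * (I1 + I2 + I3)"
    proof -
      have "\<bar>T1\<bar> \<le> l/2 * ((x1 - a)^3/3 - (a - a)^3/3) + 1/(2*l) * I1" using B1 unfolding T1_def .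
      moreover have "\<bar>T2\<bar> \<le> l/2 * ((x2 - mid)^3/3 - (x1 - mid)^3/3) + 1/(2*l) * I2" using B2 unfolding T2_def .
      moreover have "\<bar>T3\<bar> \<le> l/2 * ((b - b)^3/3 - (x2 - b)^3/3) + 1/(2*l) * I3" using B3 unfolding T3_def .
      ultimately show ?thesis using cub by (simp add: distrib_left)
    qed
    finally show ?thesis using Isum by simp
  qed
  have "\<bar>D\<bar> \<le> sqrt w / (4 * sqrt 3) * sqrt \<sigma>" by (rule final_alg[OF w key])
  then show ?thesis unfolding D_def x1_def x2_def w_def \<sigma>_def Q_def .
qed

end
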